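(* Let $I$ be an ideal of a metric Hom-Jacobi-Jordan algebra $(J,[\cdot,\cdot],\alpha,B)$. Then (1) $I^{\perp}$ is an ideal of $J$; (2) the centralizer $\mathfrak Z(I)$ of $I$ contains $I^{\perp}$.
   Context: A Hom-Jacobi-Jordan algebra is $(J,[\cdot,\cdot],\alpha)$ with $[\cdot,\cdot]$ symmetric bilinear, $\alpha$ linear and $[\alpha(x),[y,z]]+[\alpha(y),[z,x]]+[\alpha(z),[x,y]]=0$. A metric Hom-Jacobi-Jordan algebra is such an algebra with a nondegenerate symmetric bilinear form $B$ satisfying $B(x,[y,z])=B([x,y],z)$ and $B(\alpha(x),y)=B(x,\alpha(y))$. An ideal is a subspace $I$ with $[x,y]\in I$ and $\alpha(x)\in I$ for all $x\in I$, $y\in J$. $I^\perp=\{x\in J: B(x,y)=0\ \forall y\in I\}$, and $\mathfrak Z(I)=\{x\in J:[x,y]=0\ \forall y\in I\}$. *)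

theory Defs
  imports "HOL.Vector_Spaces"
begin

definition hom_jacobi_jordan ::
  "('k::field \<Rightarrow> 'v::ab_group_add \<Rightarrow> 'v) \<Rightarrow> ('v \<Rightarrow> 'v \<Rightarrow> 'v) \<Rightarrow> ('v \<Rightarrow> 'v) \<Rightarrow> bool" where
  "hom_jacobi_jordan scale br \<alpha> \<longleftrightarrow>
     vector_space scale \<and>
     (\<forall>x. Vector_Spaces.linear scale scale (br x)) \<and>
     (\<forall>y. Vector_Spaces.linear scale scale (\<lambda>x. br x y)) \<and>
     (\<forall>x y. br x y = br y x) \<and>
     Vector_Spaces.linear scale scale \<alpha> \<and>
     (\<forall>x y z. br (\<alpha> x) (br y z) + br (\<alpha> y) (br z x) + br (\<alpha> z) (br x y) = 0)"

definition metric_hom_jacobi_jordan ::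
  "('k::field \<Rightarrow> 'v::ab_group_add \<Rightarrow> 'v) \<Rightarrow> ('v \<Rightarrow> 'v \<Rightarrow> 'v) \<Rightarrow> ('v \<Rightarrow> 'v) \<Rightarrow> ('v \<Rightarrow> 'v \<Rightarrow> 'k) \<Rightarrow> bool" where
  "metric_hom_jacobi_jordan scale br \<alpha> B \<longleftrightarrow>
     hom_jacobi_jordan scale br \<alpha> \<and>
     (\<forall>x. Vector_Spaces.linear scale (*) (B x)) \<and>
     (\<forall>y. Vector_Spaces.linear scale (*) (\<lambda>x. B x y)) \<and>
     (\<forall>x y. B x y = B y x) \<and>
     (\<forall>x. (\<forall>y. B x y = 0) \<longrightarrow> x = 0) \<and>
     (\<forall>x y z. B x (br y z) = B (br x y) z) \<and>
     (\<forall>x y. B (\<alpha> x) y = B x (\<alpha> y))"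

definition hjj_ideal ::
  "('k::field \<Rightarrow> 'v::ab_group_add \<Rightarrow> 'v) \<Rightarrow> ('v \<Rightarrow> 'v \<Rightarrow> 'v) \<Rightarrow> ('v \<Rightarrow> 'v) \<Rightarrow> 'v set \<Rightarrow> bool" where
  "hjj_ideal scale br \<alpha> I \<longleftrightarrow>
     module.subspace scale I \<and> (\<forall>x\<in>I. \<forall>y. br x y \<in> I) \<and> (\<forall>x\<in>I. \<alpha> x \<in> I)"

definition orth :: "('v \<Rightarrow> 'v \<Rightarrow> 'k::zero) \<Rightarrow> 'v set \<Rightarrow> 'v set" where
  "orth B I = {x. \<forall>y\<in>I. B x y = 0}"

definition centralizer :: "('v \<Rightarrow> 'v \<Rightarrow> 'v::zero) \<Rightarrow> 'v set \<Rightarrow> 'v set" where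
  "centralizer br I = {x. \<forall>y\<in>I. br x y = 0}"

end

theory Submission
  imports Defs
begin

theorem proposition6p4:
  fixes scale :: "'k::field \<Rightarrow> 'v::ab_group_add \<Rightarrow> 'v"
    and br :: "'v \<Rightarrow> 'v \<Rightarrow> 'v" and \<alpha> :: "'v \<Rightarrow> 'v" and B :: "'v \<Rightarrow> 'v \<Rightarrow> 'k"
    and I :: "'v set"
  assumes "metric_hom_jacobi_jordan scale br \<alpha> B"
    and "hjj_ideal scale br \<alpha> I"
  shows "hjj_ideal scale br \<alpha> (orth B I) \<and> orth B I \<subseteq> centralizer br I"
proof -
  have lin: "\<And>y. Vector_Spaces.linear scale (*) (\<lambda>x. B x y)"
    and sym: "\<And>x y. B x y = B y x"
    and nd: "\<And>x. (\<forall>y. B x y = 0) \<Longrightarrow> x = 0"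
    and inv: "\<And>x y z. B x (br y z) = B (br x y) z"
    and ainv: "\<And>x y. B (\<alpha> x) y = B x (\<alpha> y)"
    and brs: "\<And>x y. br x y = br y x"
    using assms(1) unfolding metric_hom_jacobi_jordan_def hom_jacobi_jordan_def by blast+
  have Ibr: "\<And>x y. x \<in> I \<Longrightarrow> br x y \<in> I" and Ia: "\<And>x. x \<in> I \<Longrightarrow> \<alpha> x \<in> I"
    using assms(2) unfolding hjj_ideal_def by blast+
  have z: "B 0 y = 0" for y using lin[of y, THEN linear.axioms(3)] by (metis module_hom.zero)
  have a: "B (x + x') y = B x y + B x' y" for x x' y using lin[of y, THEN linear.axioms(3)] by (metis module_hom.add)
  have s: "B (scale c x) y = c * B x y" for c x y using lin[of y, THEN linear.axioms(3)] by (metis module_hom.scale)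
  have sub: "module.subspace scale (orth B I)"
  proof -
    have vs: "vector_space scale" using assms(1)
      unfolding metric_hom_jacobi_jordan_def hom_jacobi_jordan_def by blast
    then interpret vector_space scale .
    show ?thesis unfolding subspace_def orth_def using z a s by auto
  qed
  have ob: "\<And>x y. x \<in> orth B I \<Longrightarrow> br x y \<in> orth B I"
  proof -
    fix x y assume x: "x \<in> orth B I"
    show "br x y \<in> orth B I" unfolding orth_def
    proof (intro CollectI ballI)
      fix z assume "z \<in> I"
      hence "br z y \<in> I" by (rule Ibr)
      hence "B x (br z y) = 0" using x unfolding orth_def by blast
      thus "B (br x y) z = 0" by (metis sym inv brs)
    qed
  qed
  have oa: "\<And>x. x \<in> orth B I \<Longrightarrow> \<alpha> x \<in> orth B I"
    using Ia ainv unfolding orth_def by auto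
  have c: "orth B I \<subseteq> centralizer br I"
  proof
    fix x assume x: "x \<in> orth B I"
    show "x \<in> centralizer br I" unfolding centralizer_def
    proof (intro CollectI ballI)
      fix y assume y: "y \<in> I"
      show "br x y = 0"
      proof (rule nd, intro allI)
        fix z
        have "br y z \<in> I" using y by (rule Ibr)
        hence "B x (br y z) = 0" using x unfolding orth_def by blast
        thus "B (br x y) z = 0" by (simp add: inv)
      qed
    qed
  qed
  show ?thesis using sub ob oa c unfolding hjj_ideal_def by blast
qed

end
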